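(* In the setting of the context, let $\varphi:TW\to W\times\mathbb{C}^N$ be the bundle map $\varphi(X)=\sum_{j=1}^N\tilde\Omega_{Nj}(X)\,\mathbf{e}_j$. Then $\varphi$ is an isomorphism at every point of $W$ if and only if $P_{N,i_{k,0}}\neq 0$ for all $k=1,\dots,n$ at every point of $W$, where $i_{k,0}:=m_1+\dots+m_{k-1}+1$ (the index of the first row/column of the $k$-th block).
   Context: Let $N\ge1$, $W\subset\mathbb{C}^N$ open, and $T,\tilde\Omega,B_\infty=\mathrm{diag}(\lambda_1,\dots,\lambda_N)$ define an extended generalized Okubo system on $\mathbb{P}^1\times W$: $T$ is an $N\times N$ matrix of holomorphic functions, $\tilde\Omega$ an $N\times N$ matrix of holomorphic $1$-forms, $\lambda_i-\lambda_j\notin\mathbb{Z}\setminus\{0\}$ for $i\ne j$, and $[T,\tilde\Omega]=0$, $\tilde\Omega\wedge\tilde\Omega=0$, $dT+\tilde\Omega+[\tilde\Omega,B_\infty]=0$, $d\tilde\Omega=0$. Assume there is an invertible holomorphic matrix $P$ on $W$ with $P^{-1}TP=Z_1\oplus\cdots\oplus Z_n$ and $P^{-1}\tilde\Omega P=-(dZ_1\oplus\cdots\oplus dZ_n)$, where $m_1+\dots+m_n=N$, $\Lambda_k$ is the $m_k\times m_k$ matrix with $1$'s on the superdiagonal and zeros elsewhere, $Z_k=\sum_{l=0}^{m_k-1}z_{k,l}\Lambda_k^l$, the $z_{k,0}$ are pairwise distinct on $W$, and the holomorphic functions $(z_{k,l})_{k,l}$ form a coordinate system on $W$. $\mathbf{e}_1,\dots,\mathbf{e}_N$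 is the standard basis of $\mathbb{C}^N$. *)

theory Defs
  imports "HOL-Analysis.Analysis" "Jordan_Normal_Form.Jordan_Normal_Form"
begin

text \<open>Points of the open set W are vectors in complex^'N, with N = CARD('N).
  Matrices are Jordan_Normal_Form matrices (indices 0-based).
  A matrix of holomorphic 1-forms Omega is represented by its coefficient matrices
  Om a (a :: 'N), i.e. Omega = sum_a Om a dt_a.\<close>

text \<open>Holomorphic (complex differentiable) scalar function on an open set of complex^'N:
  Frechet differentiable with complex-linear derivative.\<close>

definition holomorphic_on_cn :: "(complex^'N \<Rightarrow> complex) \<Rightarrow> (complex^'N) set \<Rightarrow> bool" where
  "holomorphic_on_cn f W \<longleftrightarrow>
     (\<forall>x\<in>W. \<exists>L. (f has_derivative L) (at x) \<and> (\<forall>c v. L (vector_scalar_mult c v) = c * L v))"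

text \<open>Complex partial derivative in the direction of the a-th coordinate.\<close>
definition cpartial :: "(complex^'N \<Rightarrow> complex) \<Rightarrow> 'N \<Rightarrow> complex^'N \<Rightarrow> complex" where
  "cpartial f a x = deriv (\<lambda>t::complex. f (x + vector_scalar_mult t (axis a 1))) 0"

definition holomorphic_mat_on :: "nat \<Rightarrow> (complex^'N \<Rightarrow> complex mat) \<Rightarrow> (complex^'N) set \<Rightarrow> bool" where
  "holomorphic_mat_on N A W \<longleftrightarrow> (\<forall>x\<in>W. A x \<in> carrier_mat N N) \<and>
     (\<forall>i<N. \<forall>j<N. holomorphic_on_cn (\<lambda>x. A x $$ (i,j)) W)"

text \<open>Entrywise partial derivative of an N x N matrix valued function.\<close>
definition cpartial_mat :: "nat \<Rightarrow> (complex^'N \<Rightarrow> complex mat) \<Rightarrow> 'N \<Rightarrow> complex^'N \<Rightarrow> complex mat" where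
  "cpartial_mat N A a x = mat N N (\<lambda>(i,j). cpartial (\<lambda>y. A y $$ (i,j)) a x)"

text \<open>Lambda_k: m x m matrix with 1's on the superdiagonal, zeros elsewhere.\<close>
definition Lam :: "nat \<Rightarrow> complex mat" where
  "Lam m = jordan_block m 0"

text \<open>Z_k = sum_{l<m_k} z_{k,l} Lambda_k^l.\<close>
definition Zblock :: "(nat \<Rightarrow> nat) \<Rightarrow> (nat \<Rightarrow> nat \<Rightarrow> complex^'N \<Rightarrow> complex) \<Rightarrow> nat \<Rightarrow> complex^'N \<Rightarrow> complex mat" where
  "Zblock m z k x = foldr (\<lambda>l acc. z k l x \<cdot>\<^sub>m (Lam (m k) ^\<^sub>m l) + acc) [0..<m k] (0\<^sub>m (m k) (m k))"

text \<open>Coefficient of dt_a in dZ_k = sum_{l<m_k} dz_{k,l} Lambda_k^l.\<close>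
definition dZblock :: "(nat \<Rightarrow> nat) \<Rightarrow> (nat \<Rightarrow> nat \<Rightarrow> complex^'N \<Rightarrow> complex) \<Rightarrow> nat \<Rightarrow> 'N \<Rightarrow> complex^'N \<Rightarrow> complex mat" where
  "dZblock m z k a x = foldr (\<lambda>l acc. cpartial (z k l) a x \<cdot>\<^sub>m (Lam (m k) ^\<^sub>m l) + acc) [0..<m k] (0\<^sub>m (m k) (m k))"

text \<open>Extended generalized Okubo system (T, Omega, B_infinity = diag lam) on W.\<close>
definition ext_gen_okubo ::
  "nat \<Rightarrow> (complex^'N) set \<Rightarrow> (complex^'N \<Rightarrow> complex mat) \<Rightarrow> ('N \<Rightarrow> complex^'N \<Rightarrow> complex mat)
     \<Rightarrow> (nat \<Rightarrow> complex) \<Rightarrow> bool" where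
  "ext_gen_okubo N W T Om lam \<longleftrightarrow>
     (let B = mat N N (\<lambda>(i,j). if i = j then lam i else 0) in
      holomorphic_mat_on N T W \<and> (\<forall>a. holomorphic_mat_on N (Om a) W) \<and>
      (\<forall>i<N. \<forall>j<N. i \<noteq> j \<longrightarrow> (\<forall>k::int. lam i - lam j = of_int k \<longrightarrow> k = 0)) \<and>
      \<comment> \<open>[T, Omega] = 0\<close>
      (\<forall>x\<in>W. \<forall>a. T x * Om a x = Om a x * T x) \<and>
      \<comment> \<open>Omega wedge Omega = 0\<close>
      (\<forall>x\<in>W. \<forall>a b. Om a x * Om b x - Om b x * Om a x = 0\<^sub>m N N) \<and>
      \<comment> \<open>dT + Omega + [Omega, B] = 0\<close>
      (\<forall>x\<in>W. \<forall>a. cpartial_mat N T a x + Om a x + (Om a x * B - B * Om a x) = 0\<^sub>m N N) \<and>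
      \<comment> \<open>d Omega = 0\<close>
      (\<forall>x\<in>W. \<forall>a b. cpartial_mat N (Om b) a x - cpartial_mat N (Om a) b x = 0\<^sub>m N N))"

text \<open>The bundle map phi at x: X = v (tangent vector in C^N) maps to
  sum_j Omega_{N,j}(X) e_j, i.e. (0-based) row N-1 of Omega(v).\<close>
definition phi_map :: "nat \<Rightarrow> ('N \<Rightarrow> complex^'N \<Rightarrow> complex mat) \<Rightarrow> complex^'N \<Rightarrow> complex^'N \<Rightarrow> complex vec" where
  "phi_map N Om x v = vec N (\<lambda>j. \<Sum>a\<in>UNIV. vec_nth v a * (Om a x $$ (N - 1, j)))"

text \<open>0-based index of the first row/column of the k-th block (k 0-based).\<close>
definition istart :: "(nat \<Rightarrow> nat) \<Rightarrow> nat \<Rightarrow> nat" where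
  "istart m k = (\<Sum>k'<k. m k')"

end

theory Submission imports Defs begin

lemma istart_Suc: "istart m (Suc k) = istart m k + m k"
  by (simp add: istart_def)

lemma istart_mono: "k \<le> k' \<Longrightarrow> istart m k \<le> istart m k'"
  unfolding istart_def by (rule sum_mono2) auto

lemma sum_lessThan_add: "(\<Sum>i<a+(b::nat). f i) = (\<Sum>i<a. f i) + (\<Sum>s<b. (f (a+s) :: 'a::comm_monoid_add))"
  by (induction b) (simp_all add: add.assoc)

lemma sum_blocks:
  "(\<Sum>i<(\<Sum>k<n. m k). f i) = (\<Sum>k<n. \<Sum>s<m k. (f (istart m k + s) :: 'a::comm_monoid_add))"
proof (induction n)
  case 0 then show ?case by simp
next
  case (Suc n)
  have "(\<Sum>i<(\<Sum>k<Suc n. m k). f i) = (\<Sum>i<(\<Sum>k<n. m k) + m n. f i)" by simp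
  also have "\<dots> = (\<Sum>i<(\<Sum>k<n. m k). f i) + (\<Sum>s<m n. f ((\<Sum>k<n. m k) + s))"
    by (rule sum_lessThan_add)
  finally show ?case using Suc.IH by (simp add: istart_def)
qed

lemma decomp_ex: "i < (\<Sum>k<n. m k) \<Longrightarrow> \<exists>k<n. \<exists>s<m k. i = istart m k + s"
proof (induction n)
  case 0 then show ?case by simp
next
  case (Suc n)
  show ?case
  proof (cases "i < (\<Sum>k<n. m k)")
    case True then show ?thesis using Suc.IH by (meson less_SucI)
  next
    case False
    then show ?thesis using Suc.prems
      by (intro exI[of _ n]) (auto simp: istart_def intro!: exI[of _ "i - (\<Sum>k<n. m k)"])
  qed
qed

lemma decomp_uniq:
  assumes "s < m k" "s' < m k'" "istart m k + s = istart m k' + s'"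
  shows "k = k' \<and> s = s'"
proof -
  have "\<not> k < k'" if "s < m k" "istart m k + s = istart m k' + s'" for k k' s s'
  proof
    assume "k < k'"
    then have "istart m (Suc k) \<le> istart m k'" by (intro istart_mono) simp
    with that show False by (simp add: istart_Suc)
  qed
  with assms have "k = k'" by (metis linorder_neqE_nat)
  with assms show ?thesis by simp
qed

lemma sum_list_take_lt:
  assumes "k < length As" "s < dim_row (As!k)"
  shows "sum_list (map dim_row (take k As)) + s < sum_list (map dim_row As)"
  using assms
proof (induction As arbitrary: k)
  case Nil then show ?case by simp
next
  case (Cons A As) then show ?case by (cases k) auto
qed

lemma diag_block_mat_index:
  assumes "\<forall>A\<in>set As. dim_col A = dim_row A" "k < length As" "k' < length As"
    "s < dim_row (As!k)" "s' < dim_row (As!k')"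
  shows "diag_block_mat As $$ (sum_list (map dim_row (take k As)) + s, sum_list (map dim_row (take k' As)) + s')
     = (if k = k' then As!k $$ (s,s') else 0)"
  using assms
proof (induction As arbitrary: k k')
  case Nil then show ?case by simp
next
  case (Cons A As)
  have dc: "sum_list (map dim_col As) = sum_list (map dim_row As)"
    using Cons.prems(1) by (induction As) auto
  have dcA: "dim_col A = dim_row A" using Cons.prems(1) by simp
  show ?case
  proof (cases k)
    case 0
    show ?thesis
    proof (cases k')
      case 0 then show ?thesis using \<open>k = 0\<close> Cons.prems dcA dc
        by (simp add: Let_def dim_diag_block_mat)
    next
      case (Suc j')
      have "sum_list (map dim_row (take j' As)) + s' < sum_list (map dim_row As)"
        using Cons.prems Suc by (intro sum_list_take_lt) auto
      then show ?thesis using \<open>k = 0\<close> Suc Cons.prems dcA dc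
        by (simp add: Let_def dim_diag_block_mat)
    qed
  next
    case (Suc j)
    have lj: "sum_list (map dim_row (take j As)) + s < sum_list (map dim_row As)"
      using Cons.prems Suc by (intro sum_list_take_lt) auto
    show ?thesis
    proof (cases k')
      case 0 then show ?thesis using Suc Cons.prems dcA dc lj
        by (simp add: Let_def dim_diag_block_mat)
    next
      case (Suc j')
      have "sum_list (map dim_row (take j' As)) + s' < sum_list (map dim_row As)"
        using Cons.prems Suc by (intro sum_list_take_lt) auto
      moreover have "diag_block_mat As $$ (sum_list (map dim_row (take j As)) + s, sum_list (map dim_row (take j' As)) + s')
         = (if j = j' then As!j $$ (s,s') else 0)"
        using Cons.prems \<open>k = Suc j\<close> Suc by (intro Cons.IH) auto
      ultimately show ?thesis using \<open>k = Suc j\<close> Suc Cons.prems dcA dc lj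
        by (simp add: Let_def dim_diag_block_mat add.assoc)
    qed
  qed
qed

lemma foldr_smult_carrier:
  assumes "\<And>l. L l \<in> carrier_mat d d"
  shows "foldr (\<lambda>l acc. g l \<cdot>\<^sub>m L l + acc) xs (0\<^sub>m d d) \<in> carrier_mat d d"
  using assms by (induction xs) auto

lemma foldr_smult_index:
  assumes "\<And>l. L l \<in> carrier_mat d d" "s < d" "s' < d"
  shows "foldr (\<lambda>l acc. g l \<cdot>\<^sub>m L l + acc) xs (0\<^sub>m d d) $$ (s,s') = (\<Sum>l\<leftarrow>xs. g l * L l $$ (s,s'))"
  using assms
proof (induction xs)
  case Nil then show ?case by simp
next
  case (Cons a xs)
  have c: "foldr (\<lambda>l acc. g l \<cdot>\<^sub>m L l + acc) xs (0\<^sub>m d d) \<in> carrier_mat d d"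
    using foldr_smult_carrier[of L d] Cons.prems by blast
  have cl: "L a \<in> carrier_mat d d" using Cons.prems by blast
  have "(g a \<cdot>\<^sub>m L a) $$ (s,s') = g a * L a $$ (s,s')" using cl Cons.prems(2,3) by (metis carrier_matD(1,2) index_smult_mat(1))
  note e = this
  have "foldr (\<lambda>l acc. g l \<cdot>\<^sub>m L l + acc) (a#xs) (0\<^sub>m d d) $$ (s,s') =
     (g a \<cdot>\<^sub>m L a) $$ (s,s') + foldr (\<lambda>l acc. g l \<cdot>\<^sub>m L l + acc) xs (0\<^sub>m d d) $$ (s,s')"
    using c cl Cons.prems(2,3) by simp
  also have "\<dots> = g a * L a $$ (s,s') + (\<Sum>l\<leftarrow>xs. g l * L l $$ (s,s'))"
    by (simp only: e Cons.IH[OF Cons.prems])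
  finally show ?case by simp
qed

lemma dZblock_carrier: "dZblock m z k a x \<in> carrier_mat (m k) (m k)"
  unfolding dZblock_def Lam_def by (rule foldr_smult_carrier) simp

lemma dZblock_index:
  assumes "s < m k" "s' < m k"
  shows "dZblock m z k a x $$ (s,s') = (if s \<le> s' then cpartial (z k (s'-s)) a x else 0)"
proof -
  have "dZblock m z k a x $$ (s,s') = (\<Sum>l\<leftarrow>[0..<m k]. cpartial (z k l) a x * (Lam (m k) ^\<^sub>m l) $$ (s,s'))"
    unfolding dZblock_def Lam_def using assms by (intro foldr_smult_index) auto
  also have "\<dots> = (\<Sum>l<m k. cpartial (z k l) a x * (Lam (m k) ^\<^sub>m l) $$ (s,s'))"
    by (simp add: sum_list_sum_nth atLeast0LessThan)
  also have "\<dots> = (\<Sum>l<m k. if l = s' - s \<and> s \<le> s' then cpartial (z k l) a x else 0)"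
  proof (rule sum.cong[OF refl])
    fix l assume "l \<in> {..<m k}"
    have e: "(Lam (m k) ^\<^sub>m l) $$ (s,s') = (if s \<le> s' then of_nat (l choose (s' - s)) * 0 ^ (l + s - s') else 0)"
      unfolding Lam_def jordan_block_pow using assms by simp
    show "cpartial (z k l) a x * (Lam (m k) ^\<^sub>m l) $$ (s,s') = (if l = s' - s \<and> s \<le> s' then cpartial (z k l) a x else 0)"
      unfolding e by (cases "l < s' - s") auto
  qed
  also have "\<dots> = (if s \<le> s' then cpartial (z k (s'-s)) a x else 0)"
    using assms by (auto simp: sum.delta')
  finally show ?thesis .
qed

lemma det_inverse_ex:
  assumes A: "(A :: complex mat) \<in> carrier_mat n n" and d: "det A \<noteq> 0"
  shows "\<exists>B\<in>carrier_mat n n. A * B = 1\<^sub>m n \<and> B * A = 1\<^sub>m n"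
proof -
  have "A \<in> Units (ring_mat TYPE(complex) n ())" by (rule det_non_zero_imp_unit[OF A d])
  then show ?thesis unfolding Units_def ring_mat_def by auto
qed

lemma bij_mat_vec:
  assumes A: "(A :: complex mat) \<in> carrier_mat n n"
  shows "bij_betw ((*\<^sub>v) A) (carrier_vec n) (carrier_vec n) \<longleftrightarrow> det A \<noteq> 0"
proof
  assume b: "bij_betw ((*\<^sub>v) A) (carrier_vec n) (carrier_vec n)"
  show "det A \<noteq> 0"
  proof
    assume "det A = 0"
    then obtain v where v: "v \<in> carrier_vec n" "v \<noteq> 0\<^sub>v n" "A *\<^sub>v v = 0\<^sub>v n"
      using det_0_iff_vec_prod_zero[OF A] by auto
    have "A *\<^sub>v 0\<^sub>v n = 0\<^sub>v n" using A by (intro eq_vecI) (auto simp: scalar_prod_def)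
    then have eq: "A *\<^sub>v v = A *\<^sub>v 0\<^sub>v n" using v by simp
    have inj: "inj_on ((*\<^sub>v) A) (carrier_vec n)" using b by (rule bij_betw_imp_inj_on)
    have "v = 0\<^sub>v n" using inj_onD[OF inj eq v(1) zero_carrier_vec[of n]] .
    with v show False by simp
  qed
next
  assume d: "det A \<noteq> 0"
  then obtain B where B: "B \<in> carrier_mat n n" "A * B = 1\<^sub>m n" "B * A = 1\<^sub>m n"
    using det_inverse_ex[OF A] by blast
  show "bij_betw ((*\<^sub>v) A) (carrier_vec n) (carrier_vec n)"
    unfolding bij_betw_def
  proof
    show "inj_on ((*\<^sub>v) A) (carrier_vec n)"
    proof
      fix v w assume vw: "v \<in> carrier_vec n" "w \<in> carrier_vec n" "A *\<^sub>v v = A *\<^sub>v w"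
      have "B *\<^sub>v (A *\<^sub>v v) = B *\<^sub>v (A *\<^sub>v w)" using vw by simp
      moreover have "(B * A) *\<^sub>v v = B *\<^sub>v (A *\<^sub>v v)" using vw A B by (intro assoc_mult_mat_vec) auto
      moreover have "(B * A) *\<^sub>v w = B *\<^sub>v (A *\<^sub>v w)" using vw A B by (intro assoc_mult_mat_vec) auto
      ultimately have "(B * A) *\<^sub>v v = (B * A) *\<^sub>v w" by simp
      then show "v = w" using vw B by simp
    qed
    show "(*\<^sub>v) A ` carrier_vec n = carrier_vec n"
    proof
      show "(*\<^sub>v) A ` carrier_vec n \<subseteq> carrier_vec n" using A by auto
      show "carrier_vec n \<subseteq> (*\<^sub>v) A ` carrier_vec n"
      proof
        fix y :: "complex vec" assume y: "y \<in> carrier_vec n"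
        have "A *\<^sub>v (B *\<^sub>v y) = (A * B) *\<^sub>v y" using y A B by (intro assoc_mult_mat_vec[symmetric]) auto
        then have "A *\<^sub>v (B *\<^sub>v y) = y" using y B by simp
        moreover have "B *\<^sub>v y \<in> carrier_vec n" using B y by simp
        ultimately show "y \<in> (*\<^sub>v) A ` carrier_vec n" by (metis image_eqI)
      qed
    qed
  qed
qed

definition dec :: "nat \<Rightarrow> (nat \<Rightarrow> nat) \<Rightarrow> nat \<Rightarrow> nat \<times> nat" where
  "dec n m i = (SOME p. fst p < n \<and> snd p < m (fst p) \<and> i = istart m (fst p) + snd p)"

lemma dec_props:
  assumes "i < (\<Sum>k<n. m k)"
  shows "fst (dec n m i) < n" "snd (dec n m i) < m (fst (dec n m i))"
    "i = istart m (fst (dec n m i)) + snd (dec n m i)"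
proof -
  obtain k s where "k < n" "s < m k" "i = istart m k + s" using decomp_ex[OF assms] by blast
  then have "\<exists>p. fst p < n \<and> snd p < m (fst p) \<and> i = istart m (fst p) + snd p"
    by (intro exI[of _ "(k,s)"]) simp
  from someI_ex[OF this] show "fst (dec n m i) < n" "snd (dec n m i) < m (fst (dec n m i))"
    "i = istart m (fst (dec n m i)) + snd (dec n m i)" unfolding dec_def by auto
qed

lemma istart_lt: "k < n \<Longrightarrow> s < m k \<Longrightarrow> istart m k + s < (\<Sum>k<n. m k)"
  using istart_mono[of "Suc k" n m] by (simp add: istart_Suc istart_def[of m n, symmetric])

lemma dec_eq:
  assumes "k < n" "s < m k"
  shows "dec n m (istart m k + s) = (k, s)"
proof -
  have l: "istart m k + s < (\<Sum>k<n. m k)" using istart_lt assms by blast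
  note p = dec_props[OF l]
  have "fst (dec n m (istart m k + s)) = k \<and> snd (dec n m (istart m k + s)) = s"
    using decomp_uniq[OF p(2) assms(2) p(3)[symmetric]] by simp
  then show ?thesis by (metis prod.collapse)
qed

lemma sum_list_upt_istart: "sum_list (map m [0..<k]) = istart m k"
  unfolding istart_def by (simp add: sum_list_sum_nth atLeast0LessThan)


lemma take_upt0: "take j [0..<n] = [0..<min j n]" by (rule nth_equalityI) auto

lemma dZ_dim[simp]: "dim_row (dZblock m z k a x) = m k" "dim_col (dZblock m z k a x) = m k"
  using dZblock_carrier[of m z k a x] by auto

lemma dZ_rows: "map dim_row (take j (map (\<lambda>k. dZblock m z k a x) [0..<n])) = map m [0..<min j n]"
  by (simp add: take_map take_upt0)

lemma dZ_istart: "j \<le> n \<Longrightarrow> sum_list (map dim_row (take j (map (\<lambda>k. dZblock m z k a x) [0..<n]))) = istart m j"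
  by (simp add: dZ_rows sum_list_upt_istart)
lemma D_index:
  assumes "k < n" "k' < n" "s < m k" "s' < m k'"
  shows "diag_block_mat (map (\<lambda>k. dZblock m z k a x) [0..<n]) $$ (istart m k + s, istart m k' + s')
     = (if k = k' \<and> s \<le> s' then cpartial (z k (s'-s)) a x else 0)"
proof -
  let ?As = "map (\<lambda>k. dZblock m z k a x) [0..<n]"
  have sq: "\<forall>A\<in>set ?As. dim_col A = dim_row A" by simp
  have "diag_block_mat ?As $$ (sum_list (map dim_row (take k ?As)) + s, sum_list (map dim_row (take k' ?As)) + s')
     = (if k = k' then ?As!k $$ (s,s') else 0)"
    by (rule diag_block_mat_index[OF sq]) (use assms in simp_all)
  then have "diag_block_mat ?As $$ (istart m k + s, istart m k' + s')
     = (if k = k' then dZblock m z k a x $$ (s,s') else 0)"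
    using assms by (simp add: dZ_istart)
  then show ?thesis using dZblock_index[of s m k s' z a x] assms(3,4) by (cases "k = k'") auto
qed

lemma point:
  fixes Om :: "'N::finite \<Rightarrow> complex^'N \<Rightarrow> complex mat" and x :: "complex^'N"
    and z :: "nat \<Rightarrow> nat \<Rightarrow> complex^'N \<Rightarrow> complex"
  assumes NN: "N = CARD('N)" and msum: "(\<Sum>k<n. m k) = N" and mpos: "\<forall>k<n. m k \<ge> 1"
    and Pc: "P \<in> carrier_mat N N" and Qc: "Q \<in> carrier_mat N N"
    and PQ: "P * Q = 1\<^sub>m N" and QP: "Q * P = 1\<^sub>m N"
    and Omc: "\<forall>a. Om a x \<in> carrier_mat N N"
    and POm: "\<forall>a. Om a x * P = P * (- diag_block_mat (map (\<lambda>k. dZblock m z k a x) [0..<n]))"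
    and zd: "\<forall>v::complex^'N. (\<forall>k<n. \<forall>l<m k. (\<Sum>a\<in>UNIV. vec_nth v a * cpartial (z k l) a x) = 0) \<longrightarrow> v = 0"
  shows "bij_betw (phi_map N Om x) UNIV (carrier_vec N) \<longleftrightarrow> (\<forall>k<n. P $$ (N - 1, istart m k) \<noteq> 0)"
proof -
  obtain h where h0: "bij_betw h {0..<card (UNIV::'N set)} (UNIV::'N set)"
    using ex_bij_betw_nat_finite[of "UNIV::'N set"] by auto
  have h: "bij_betw h {..<N} (UNIV::'N set)" using h0 NN by (simp add: atLeast0LessThan)
  define u where "u = (\<lambda>v::complex^'N. vec N (\<lambda>t. v $ h t))"
  define D where "D a = diag_block_mat (map (\<lambda>k. dZblock m z k a x) [0..<n])" for a
  define p where "p r = P $$ (N - 1, r)" for r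
  define fk where "fk r = fst (dec n m r)" for r
  define sk where "sk r = snd (dec n m r)" for r
  define cc where "cc v k l = (\<Sum>a\<in>UNIV. v $ a * cpartial (z k l) a x)" for v k l
  define M where "M = mat N N (\<lambda>(i,j). if fk i = fk j \<and> sk j \<le> sk i then - p (istart m (fk i) + (sk i - sk j)) else 0)"
  define C where "C = mat N N (\<lambda>(r,t). cpartial (z (fk r) (sk r)) (h t) x)"
  define R where "R = transpose_mat Q * M * C"
  have Mc: "M \<in> carrier_mat N N" and Cc: "C \<in> carrier_mat N N" and Rc: "R \<in> carrier_mat N N"
    using Qc by (auto simp: M_def C_def R_def)
  have fs: "fk i < n" "sk i < m (fk i)" "i = istart m (fk i) + sk i" if "i < N" for i
    using dec_props[of i m n] that msum by (auto simp: fk_def sk_def)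
  have fseq: "fk (istart m k + s) = k" "sk (istart m k + s) = s" if "k < n" "s < m k" for k s
    using dec_eq[of k n s m, OF that] by (auto simp: fk_def sk_def)
  have ilt: "istart m k + s < N" if "k < n" "s < m k" for k s
    using istart_lt[of k n s m, OF that] msum by simp
  have Dc: "D a \<in> carrier_mat N N" for a
  proof -
    have "sum_list (map dim_row (map (\<lambda>k. dZblock m z k a x) [0..<n])) = N"
      using dZ_istart[where j=n and n=n and m=m and z=z and a=a and x=x] msum by (simp add: istart_def)
    moreover have "sum_list (map dim_col (map (\<lambda>k. dZblock m z k a x) [0..<n])) = N"
      using dZ_istart[where j=n and n=n and m=m and z=z and a=a and x=x] msum by (simp add: istart_def o_def)
    ultimately show ?thesis unfolding D_def carrier_mat_def by (simp add: dim_diag_block_mat)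
  qed
  have Dix: "D a $$ (istart m k + s, istart m k' + s') = (if k = k' \<and> s \<le> s' then cpartial (z k (s'-s)) a x else 0)"
    if "k < n" "k' < n" "s < m k" "s' < m k'" for a k k' s s'
    unfolding D_def by (rule D_index[OF that])
  \<comment> \<open>Om = P (-D) Q\<close>
  have OmE: "Om a x = P * (- D a) * Q" for a
  proof -
    have "Om a x = Om a x * (P * Q)" using PQ Omc[rule_format, of a] by simp
    also have "\<dots> = (Om a x * P) * Q" using assoc_mult_mat[OF Omc[rule_format, of a] Pc Qc] by simp
    also have "\<dots> = P * (- D a) * Q" using POm by (simp add: D_def)
    finally show ?thesis .
  qed
  \<comment> \<open>bijectivity of u\<close>
  have hinv: "h (the_inv_into {..<N} h a) = a" "the_inv_into {..<N} h a < N" for a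
  proof -
    have i: "inj_on h {..<N}" and im: "a \<in> h ` {..<N}" using h by (auto simp: bij_betw_def)
    show "h (the_inv_into {..<N} h a) = a" using f_the_inv_into_f[OF i im] .
    show "the_inv_into {..<N} h a < N" using the_inv_into_into[OF i im subset_refl] by simp
  qed
  have hinj: "inj_on h {..<N}" using h by (simp add: bij_betw_def)
  have uidx: "u v $ t = v $ h t" if "t < N" for v t using that by (simp add: u_def)
  have udim: "dim_vec (u v) = N" for v by (simp add: u_def)
  have uinv: "u (\<chi> a. w $ the_inv_into {..<N} h a) = w" if w: "w \<in> carrier_vec N" for w
  proof (rule eq_vecI)
    fix t assume "t < dim_vec w"
    then have t: "t < N" using w by simp
    have "the_inv_into {..<N} h (h t) = t" using the_inv_into_f_f[OF hinj] t by simp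
    then show "u (\<chi> a. w $ the_inv_into {..<N} h a) $ t = w $ t" using uidx[OF t] by simp
  qed (use w udim in simp)
  have uinj: "v = w" if uvw: "u v = u w" for v w
  proof -
    have "v $ a = w $ a" for a
    proof -
      have "v $ a = v $ h (the_inv_into {..<N} h a)" by (simp only: hinv(1))
      also have "\<dots> = u v $ (the_inv_into {..<N} h a)" by (rule uidx[OF hinv(2), symmetric])
      also have "\<dots> = u w $ (the_inv_into {..<N} h a)" by (simp only: uvw)
      also have "\<dots> = w $ h (the_inv_into {..<N} h a)" by (rule uidx[OF hinv(2)])
      also have "\<dots> = w $ a" by (simp only: hinv(1))
      finally show ?thesis .
    qed
    then show "v = w" by (simp add: Finite_Cartesian_Product.vec_eq_iff)
  qed
  have ucar: "u v \<in> carrier_vec N" for v using udim[of v] by (rule carrier_vecI)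
  have ubij: "bij_betw u UNIV (carrier_vec N)"
  proof (rule bij_betwI')
    show "(u x = u y) = (x = y)" for x y using uinj[of x y] by blast
    show "u x \<in> carrier_vec N" for x by (rule ucar)
    show "\<exists>x\<in>UNIV. y = u x" if "y \<in> carrier_vec N" for y
      using uinv[OF that] by (intro bexI[of _ "\<chi> a. y $ the_inv_into {..<N} h a"]) simp_all
  qed
  \<comment> \<open>C u\<close>
  have Cu: "C *\<^sub>v u v = vec N (\<lambda>r. cc v (fk r) (sk r))" for v
  proof (rule eq_vecI)
    fix r assume "r < dim_vec (vec N (\<lambda>r. cc v (fk r) (sk r)))"
    then have r: "r < N" by simp
    have "(C *\<^sub>v u v) $ r = (\<Sum>t<N. cpartial (z (fk r) (sk r)) (h t) x * v $ h t)"
      using r by (simp add: C_def u_def scalar_prod_def atLeast0LessThan)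
    also have "\<dots> = (\<Sum>a\<in>UNIV. cpartial (z (fk r) (sk r)) a x * v $ a)"
      by (rule sum.reindex_bij_betw[OF h])
    also have "\<dots> = cc v (fk r) (sk r)" by (simp add: cc_def mult.commute)
    finally show "(C *\<^sub>v u v) $ r = vec N (\<lambda>r. cc v (fk r) (sk r)) $ r" using r by simp
  qed (simp add: C_def u_def)
  \<comment> \<open>key identity\<close>
  have key: "(M *\<^sub>v vec N (\<lambda>r. cc v (fk r) (sk r))) $ i
      = - (\<Sum>i0<N. p i0 * (\<Sum>a\<in>UNIV. v $ a * D a $$ (i0, i)))" if i: "i < N" for v i
  proof -
    define k' where "k' = fk i"
    define s' where "s' = sk i"
    have k': "k' < n" "s' < m k'" "i = istart m k' + s'" using fs[OF i] by (auto simp: k'_def s'_def)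
    have fki: "fk i = k'" "sk i = s'" by (simp_all add: k'_def s'_def)
    have "(M *\<^sub>v vec N (\<lambda>r. cc v (fk r) (sk r))) $ i
        = (\<Sum>r<N. M $$ (i, r) * cc v (fk r) (sk r))"
      using i Mc by (simp add: scalar_prod_def atLeast0LessThan)
    also have "\<dots> = (\<Sum>k<n. \<Sum>l<m k. M $$ (i, istart m k + l) * cc v (fk (istart m k + l)) (sk (istart m k + l)))"
      using sum_blocks[of "\<lambda>r. M $$ (i, r) * cc v (fk r) (sk r)" m n] msum by simp
    also have "\<dots> = (\<Sum>k<n. if k = k' then (\<Sum>l<m k'. if l \<le> s' then - p (istart m k' + (s' - l)) * cc v k' l else 0) else 0)"
    proof (rule sum.cong[OF refl])
      fix k assume "k \<in> {..<n}"
      then have k: "k < n" by simp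
      show "(\<Sum>l<m k. M $$ (i, istart m k + l) * cc v (fk (istart m k + l)) (sk (istart m k + l)))
         = (if k = k' then (\<Sum>l<m k'. if l \<le> s' then - p (istart m k' + (s' - l)) * cc v k' l else 0) else 0)"
        using k k'(1,2) i ilt[OF k] fseq[OF k] fki by (auto simp: M_def intro!: sum.cong)
    qed
    also have "\<dots> = (\<Sum>l<m k'. if l \<le> s' then - p (istart m k' + (s' - l)) * cc v k' l else 0)"
      using k' by (simp add: sum.delta')
    also have "\<dots> = (\<Sum>l\<in>{..s'}. - p (istart m k' + (s' - l)) * cc v k' l)"
    proof -
      have "{l\<in>{..<m k'}. l \<le> s'} = {..s'}" using k' by auto
      then show ?thesis by (simp add: sum.inter_filter[symmetric])
    qed
    also have "\<dots> = (\<Sum>s\<in>{..s'}. - p (istart m k' + s) * cc v k' (s' - s))"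
      by (rule sum.reindex_bij_witness[of _ "\<lambda>t. s' - t" "\<lambda>t. s' - t"]) auto
    also have "\<dots> = - (\<Sum>s<m k'. if s \<le> s' then p (istart m k' + s) * cc v k' (s' - s) else 0)"
    proof -
      have "{l\<in>{..<m k'}. l \<le> s'} = {..s'}" using k' by auto
      then show ?thesis by (simp add: sum.inter_filter[symmetric] sum_negf)
    qed
    also have "\<dots> = - (\<Sum>k<n. if k = k' then (\<Sum>s<m k'. if s \<le> s' then p (istart m k' + s) * cc v k' (s' - s) else 0) else 0)"
      using k' by (simp add: sum.delta')
    also have "\<dots> = - (\<Sum>k<n. \<Sum>s<m k. p (istart m k + s) * (\<Sum>a\<in>UNIV. v $ a * D a $$ (istart m k + s, i)))"
    proof -
      have "(if k = k' then (\<Sum>s<m k'. if s \<le> s' then p (istart m k' + s) * cc v k' (s' - s) else 0) else 0)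
         = (\<Sum>s<m k. p (istart m k + s) * (\<Sum>a\<in>UNIV. v $ a * D a $$ (istart m k + s, i)))" if k: "k < n" for k
      proof (cases "k = k'")
        case True
        have "(\<Sum>s<m k'. if s \<le> s' then p (istart m k' + s) * cc v k' (s' - s) else 0)
           = (\<Sum>s<m k. p (istart m k + s) * (\<Sum>a\<in>UNIV. v $ a * D a $$ (istart m k + s, i)))"
        proof (rule sum.cong)
          fix s assume "s \<in> {..<m k}"
          then have s: "s < m k" by simp
          have "(\<Sum>a\<in>UNIV. v $ a * D a $$ (istart m k + s, i)) = (if s \<le> s' then cc v k' (s' - s) else 0)"
            using Dix[OF k k'(1) s k'(2)] True k'(3) by (simp add: cc_def)
          then show "(if s \<le> s' then p (istart m k' + s) * cc v k' (s' - s) else 0) =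
             p (istart m k + s) * (\<Sum>a\<in>UNIV. v $ a * D a $$ (istart m k + s, i))"
            using True by simp
        qed (use True in simp)
        then show ?thesis using True by simp
      next
        case False
        have "(\<Sum>a\<in>UNIV. v $ a * D a $$ (istart m k + s, i)) = 0" if s: "s < m k" for s
          using Dix[OF k k'(1) s k'(2)] False k'(3) by simp
        then show ?thesis using False by simp
      qed
      then show ?thesis by simp
    qed
    also have "\<dots> = - (\<Sum>i0<N. p i0 * (\<Sum>a\<in>UNIV. v $ a * D a $$ (i0, i)))"
      using sum_blocks[of "\<lambda>i0. p i0 * (\<Sum>a\<in>UNIV. v $ a * D a $$ (i0, i))" m n] msum by simp
    finally show ?thesis .
  qed
  \<comment> \<open>phi = R u\<close>
  have phiR: "phi_map N Om x v = R *\<^sub>v u v" for v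
  proof (rule eq_vecI)
    fix j assume "j < dim_vec (R *\<^sub>v u v)"
    then have j: "j < N" using Rc by simp
    have N1: "N - 1 < N" using j by simp
    have "phi_map N Om x v $ j = (\<Sum>a\<in>UNIV. v $ a * Om a x $$ (N - 1, j))"
      using j by (simp add: phi_map_def)
    also have "\<dots> = (\<Sum>a\<in>UNIV. v $ a * (\<Sum>i<N. (\<Sum>i0<N. p i0 * - (D a $$ (i0, i))) * Q $$ (i, j)))"
    proof (rule sum.cong[OF refl])
      fix a
      have "Om a x $$ (N - 1, j) = (\<Sum>i<N. (\<Sum>i0<N. p i0 * - (D a $$ (i0, i))) * Q $$ (i, j))"
        unfolding OmE using Pc Qc Dc[of a] j N1
        apply (simp add: scalar_prod_def atLeast0LessThan p_def sum_distrib_left sum_distrib_right sum_negf mult.assoc)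
        apply (rule sum.swap)
        done
      then show "v $ a * Om a x $$ (N - 1, j) = v $ a * (\<Sum>i<N. (\<Sum>i0<N. p i0 * - (D a $$ (i0, i))) * Q $$ (i, j))"
        by simp
    qed
    also have "\<dots> = (\<Sum>i<N. Q $$ (i, j) * - (\<Sum>i0<N. p i0 * (\<Sum>a\<in>UNIV. v $ a * D a $$ (i0, i))))"
      by (simp add: sum_distrib_left sum_distrib_right sum_negf algebra_simps sum.swap[of _ UNIV])
    also have "\<dots> = (\<Sum>i<N. Q $$ (i, j) * (M *\<^sub>v (C *\<^sub>v u v)) $ i)"
      by (rule sum.cong[OF refl]) (simp add: key Cu)
    also have "\<dots> = (transpose_mat Q *\<^sub>v (M *\<^sub>v (C *\<^sub>v u v))) $ j"
      using j Qc Mc Cc by (simp add: scalar_prod_def atLeast0LessThan)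
    also have "\<dots> = (R *\<^sub>v u v) $ j"
    proof -
      have uc: "u v \<in> carrier_vec N" by (simp add: u_def)
      have "R *\<^sub>v u v = (transpose_mat Q * M) *\<^sub>v (C *\<^sub>v u v)"
        unfolding R_def using Qc Mc Cc uc by (intro assoc_mult_mat_vec) auto
      also have "\<dots> = transpose_mat Q *\<^sub>v (M *\<^sub>v (C *\<^sub>v u v))"
        using Qc Mc Cc uc by (intro assoc_mult_mat_vec) auto
      finally show ?thesis by simp
    qed
    finally show "phi_map N Om x v $ j = (R *\<^sub>v u v) $ j" .
  qed (use Rc in \<open>simp add: phi_map_def\<close>)
  have phiE: "phi_map N Om x = (*\<^sub>v) R \<circ> u" using phiR by (auto simp: fun_eq_iff)
  \<comment> \<open>determinants\<close>
  have dQ: "det (transpose_mat Q) \<noteq> 0"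
  proof -
    have "det P * det Q = 1" using det_mult[OF Pc Qc] PQ by simp
    then show ?thesis using det_transpose[OF Qc] by auto
  qed
  have dC: "det C \<noteq> 0"
  proof
    assume "det C = 0"
    then obtain w where w: "w \<in> carrier_vec N" "w \<noteq> 0\<^sub>v N" "C *\<^sub>v w = 0\<^sub>v N"
      using det_0_iff_vec_prod_zero[OF Cc] by auto
    define v where "v = (\<chi> a. w $ the_inv_into {..<N} h a)"
    have uv: "u v = w" using uinv[OF w(1)] by (simp add: v_def)
    have "cc v k l = 0" if "k < n" "l < m k" for k l
    proof -
      have e: "vec N (\<lambda>r. cc v (fk r) (sk r)) = 0\<^sub>v N" using Cu[of v] uv w(3) by simp
      have "vec N (\<lambda>r. cc v (fk r) (sk r)) $ (istart m k + l) = 0"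
        unfolding e using ilt[OF that] by simp
      then show ?thesis using ilt[OF that] fseq[OF that] by simp
    qed
    then have "v = 0" using zd by (auto simp: cc_def)
    then have "w = u 0" using uv by simp
    then have "w = 0\<^sub>v N" by (intro eq_vecI) (auto simp: u_def)
    with w(2) show False by simp
  qed
  have dM: "det M = (\<Prod>i = 0..<N. M $$ (i, i))"
  proof -
    have "det M = prod_list (diag_mat M)"
    proof (rule det_lower_triangular[OF _ Mc])
      fix i j assume ij: "i < j" "j < N"
      then have i: "i < N" by simp
      show "M $$ (i, j) = 0"
        using ij fs[OF i] fs[OF ij(2)] by (auto simp: M_def)
    qed
    then show ?thesis using Mc by (simp add: prod_list_diag_prod)
  qed
  have dMiff: "det M \<noteq> 0 \<longleftrightarrow> (\<forall>k<n. p (istart m k) \<noteq> 0)"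
  proof -
    have diag: "M $$ (i, i) = - p (istart m (fk i))" if "i < N" for i
      using that by (simp add: M_def)
    have "det M \<noteq> 0 \<longleftrightarrow> (\<forall>i<N. p (istart m (fk i)) \<noteq> 0)"
      unfolding dM using diag by (auto simp: prod_zero_iff)
    also have "\<dots> \<longleftrightarrow> (\<forall>k<n. p (istart m k) \<noteq> 0)"
    proof
      assume H: "\<forall>i<N. p (istart m (fk i)) \<noteq> 0"
      show "\<forall>k<n. p (istart m k) \<noteq> 0"
      proof (intro allI impI)
        fix k assume k: "k < n"
        have m0: "0 < m k" using mpos k by auto
        show "p (istart m k) \<noteq> 0" using H ilt[OF k m0] fseq[OF k m0] by fastforce
      qed
    next
      assume "\<forall>k<n. p (istart m k) \<noteq> 0"
      then show "\<forall>i<N. p (istart m (fk i)) \<noteq> 0" using fs by auto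
    qed
    finally show ?thesis .
  qed
  have dR: "det R = det (transpose_mat Q) * det M * det C"
    unfolding R_def using Qc Mc Cc by (simp add: det_mult[of _ N])
  have "bij_betw (phi_map N Om x) UNIV (carrier_vec N) \<longleftrightarrow> bij_betw ((*\<^sub>v) R) (carrier_vec N) (carrier_vec N)"
    unfolding phiE using bij_betw_comp_iff[OF ubij] by blast
  also have "\<dots> \<longleftrightarrow> det R \<noteq> 0" by (rule bij_mat_vec[OF Rc])
  also have "\<dots> \<longleftrightarrow> det M \<noteq> 0" using dR dQ dC by simp
  also have "\<dots> \<longleftrightarrow> (\<forall>k<n. P $$ (N - 1, istart m k) \<noteq> 0)" using dMiff by (simp add: p_def)
  finally show ?thesis .
qed

theorem mainTheorem3:
  fixes W :: "(complex^'N::finite) set"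
    and T :: "complex^'N \<Rightarrow> complex mat"
    and Om :: "'N \<Rightarrow> complex^'N \<Rightarrow> complex mat"
    and lam :: "nat \<Rightarrow> complex"
    and P :: "complex^'N \<Rightarrow> complex mat"
    and n :: nat and m :: "nat \<Rightarrow> nat"
    and z :: "nat \<Rightarrow> nat \<Rightarrow> complex^'N \<Rightarrow> complex"
  defines "N \<equiv> CARD('N)"
  assumes "open W"
    and okubo: "ext_gen_okubo N W T Om lam"
    and m_pos: "\<forall>k<n. m k \<ge> 1"
    and m_sum: "(\<Sum>k<n. m k) = N"
    and P_holo: "holomorphic_mat_on N P W"
    and P_inv: "\<forall>x\<in>W. invertible_mat (P x)"
    and PT: "\<forall>x\<in>W. T x * P x = P x * diag_block_mat (map (\<lambda>k. Zblock m z k x) [0..<n])"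
    and POm: "\<forall>x\<in>W. \<forall>a. Om a x * P x = P x * (- diag_block_mat (map (\<lambda>k. dZblock m z k a x) [0..<n]))"
    and z_holo: "\<forall>k<n. \<forall>l<m k. holomorphic_on_cn (z k l) W"
    and z_distinct: "\<forall>x\<in>W. \<forall>k<n. \<forall>k'<n. k \<noteq> k' \<longrightarrow> z k 0 x \<noteq> z k' 0 x"
    and z_coord_inj: "\<forall>x\<in>W. \<forall>y\<in>W. (\<forall>k<n. \<forall>l<m k. z k l x = z k l y) \<longrightarrow> x = y"
    and z_coord_diff: "\<forall>x\<in>W. \<forall>v::complex^'N.
          (\<forall>k<n. \<forall>l<m k. (\<Sum>a\<in>UNIV. vec_nth v a * cpartial (z k l) a x) = 0) \<longrightarrow> v = 0"
  shows "(\<forall>x\<in>W. bij_betw (phi_map N Om x) UNIV (carrier_vec N)) \<longleftrightarrow>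
         (\<forall>x\<in>W. \<forall>k<n. P x $$ (N - 1, istart m k) \<noteq> 0)"
proof -
  have pt: "bij_betw (phi_map N Om x) UNIV (carrier_vec N) \<longleftrightarrow> (\<forall>k<n. P x $$ (N - 1, istart m k) \<noteq> 0)"
    if x: "x \<in> W" for x
  proof -
    have Pc: "P x \<in> carrier_mat N N"
      using bspec[OF conjunct1[OF P_holo[unfolded holomorphic_mat_on_def]] x] .
    have Pi: "invertible_mat (P x)" using bspec[OF P_inv x] .
    have "\<exists>B. inverts_mat (P x) B \<and> inverts_mat B (P x)"
      using conjunct2[OF Pi[unfolded invertible_mat_def]] .
    then obtain B where B: "inverts_mat (P x) B" "inverts_mat B (P x)" by (elim exE conjE)
    have drP: "dim_row (P x) = N" and dcP: "dim_col (P x) = N" using Pc by auto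
    have PB: "P x * B = 1\<^sub>m N" using B(1) unfolding inverts_mat_def drP .
    have dcB: "dim_col B = N"
    proof -
      have "dim_col (P x * B) = dim_col (1\<^sub>m N :: complex mat)" by (simp only: PB)
      then show ?thesis by simp
    qed
    have BP0: "B * P x = 1\<^sub>m (dim_row B)" using B(2) unfolding inverts_mat_def .
    have drB: "dim_row B = N"
    proof -
      have "dim_col (B * P x) = dim_col (1\<^sub>m (dim_row B) :: complex mat)" by (simp only: BP0)
      then show ?thesis using dcP by simp
    qed
    have Bc: "B \<in> carrier_mat N N" using dcB drB by (intro carrier_matI)
    have BP: "B * P x = 1\<^sub>m N" using BP0 drB by simp
    have hm: "\<forall>a. holomorphic_mat_on N (Om a) W"
      using conjunct1[OF conjunct2[OF okubo[unfolded ext_gen_okubo_def Let_def]]] .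
    have Omc: "\<forall>a. Om a x \<in> carrier_mat N N"
      using hm x unfolding holomorphic_mat_on_def by auto
    have NN: "N = CARD('N)" by (simp add: N_def)
    have POm': "\<forall>a. Om a x * P x = P x * (- diag_block_mat (map (\<lambda>k. dZblock m z k a x) [0..<n]))"
      using POm x by blast
    have zd: "\<forall>v::complex^'N. (\<forall>k<n. \<forall>l<m k. (\<Sum>a\<in>UNIV. vec_nth v a * cpartial (z k l) a x) = 0) \<longrightarrow> v = 0"
      using z_coord_diff x by blast
    show ?thesis
      by (rule point[where N=N and n=n and m=m and P="P x" and Q=B and Om=Om and x=x and z=z, OF NN m_sum m_pos Pc Bc PB BP Omc POm' zd])
  qed
  then show ?thesis by (rule ball_cong[OF refl])
qed

end
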